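(* Let $q$ be a prime power, $1\le\ell\le m$, $k=\binom{m}{\ell}$, and $n=\left[{m\atop \ell}\right]_q$. Then $d_s(C(\ell,m))=n-g_s(\ell,m)$ for $s=1,\dots,k$.
   Context: Let $V=\mathbb F_q^m$ with fixed basis $e_1,\dots,e_m$; identify $\bigwedge^mV$ with $\mathbb F_q$ via $e_1\wedge\cdots\wedge e_m=1$. Fix representatives $\omega'_1,\dots,\omega'_n\in\bigwedge^{\ell}V$, $\omega'_i=v_1\wedge\cdots\wedge v_\ell$ for a basis of the $i$-th $\ell$-dimensional subspace of $V$ (one for each such subspace), and let $T(\ell,m)=\{\omega'_1,\dots,\omega'_n\}$. The Grassmann code $C(\ell,m)$ is the image of the injective map $\tau:\bigwedge^{m-\ell}V\to\mathbb F_q^n$, $\tau(\omega)=(\omega'_1\wedge\omega,\dots,\omega'_n\wedge\omega)$. For a subspace $\mathcal E$ of $\bigwedge^{\ell}V$, $g(\mathcal E)=|\mathcal E\cap T(\ell,m)|$, and $g_s(\ell,m)=\max\{g(\mathcal E):\mathcal E\text{ a subspace of }\bigwedge^\ell V\text{ of codimension }s\}$. For a code $C$, $d_r(C)=\min\{\|D\|: D\subseteq C\text{ subspace},\ \dim D=r\}$, where $\|D\|$ is the number of coordinates $i$ such that $x_i\neq0$ for some $x\in D$. *)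

theory Defs
  imports Complex_Main "HOL-Library.Function_Algebras"
begin

definition fscale :: "'a::field \<Rightarrow> ('x \<Rightarrow> 'a) \<Rightarrow> ('x \<Rightarrow> 'a)" where
  "fscale c f = (\<lambda>x. c * f x)"

abbreviation fsubspace :: "('x \<Rightarrow> 'a::field) set \<Rightarrow> bool" where
  "fsubspace S \<equiv> module.subspace fscale S"
abbreviation fspan :: "('x \<Rightarrow> 'a::field) set \<Rightarrow> ('x \<Rightarrow> 'a) set" where
  "fspan S \<equiv> module.span fscale S"
abbreviation findependent :: "('x \<Rightarrow> 'a::field) set \<Rightarrow> bool" where
  "findependent S \<equiv> \<not> module.dependent fscale S"
abbreviation fdim :: "('x \<Rightarrow> 'a::field) set \<Rightarrow> nat" where
  "fdim S \<equiv> vector_space.dim fscale S"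

text \<open>V = F^m: vectors with coordinates indexed by 0..m-1 (e_{i+1} is the i-th unit vector).\<close>
definition Vsp :: "nat \<Rightarrow> (nat \<Rightarrow> 'a::field) set" where
  "Vsp m = {v. \<forall>i. m \<le> i \<longrightarrow> v i = 0}"

text \<open>The exterior power \<And>^k V in coordinates w.r.t. the standard basis e_I
  (I a k-subset of {0..<m}, e_I = e_{i1} wedge ... wedge e_{ik} with i1<...<ik).\<close>
definition Ext :: "nat \<Rightarrow> nat \<Rightarrow> (nat set \<Rightarrow> 'a::field) set" where
  "Ext k m = {\<alpha>. \<forall>I. \<alpha> I \<noteq> 0 \<longrightarrow> I \<subseteq> {0..<m} \<and> card I = k}"

text \<open>Wedge product in the exterior algebra: e_I wedge e_J = (-1)^{inv(I,J)} e_{I \<union> J}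
  for disjoint I, J, where inv(I,J) = #{(i,j) in I x J. j < i}.\<close>
definition wedge :: "(nat set \<Rightarrow> 'a::field) \<Rightarrow> (nat set \<Rightarrow> 'a) \<Rightarrow> (nat set \<Rightarrow> 'a)" where
  "wedge \<alpha> \<beta> = (\<lambda>K. \<Sum>I\<in>Pow K.
      (-1) ^ card {(i, j). i \<in> I \<and> j \<in> K - I \<and> j < i} * \<alpha> I * \<beta> (K - I))"

definition ext_one :: "nat set \<Rightarrow> 'a::field" where
  "ext_one = (\<lambda>I. if I = {} then 1 else 0)"

definition vec1 :: "(nat \<Rightarrow> 'a::field) \<Rightarrow> (nat set \<Rightarrow> 'a)" where
  "vec1 v = (\<lambda>I. if card I = 1 then v (the_elem I) else 0)"

definition wedge_list :: "(nat \<Rightarrow> 'a::field) list \<Rightarrow> (nat set \<Rightarrow> 'a)" where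
  "wedge_list vs = foldr (\<lambda>v acc. wedge (vec1 v) acc) vs ext_one"

text \<open>Identification of \<And>^m V with F via e_1 wedge ... wedge e_m = 1.\<close>
definition top_coeff :: "nat \<Rightarrow> (nat set \<Rightarrow> 'a::field) \<Rightarrow> 'a" where
  "top_coeff m \<alpha> = \<alpha> {0..<m}"

text \<open>The set of l-dimensional subspaces of V = F^m (the coordinate index set of C(l,m)).\<close>
definition Grass :: "nat \<Rightarrow> nat \<Rightarrow> (nat \<Rightarrow> 'a::field) set set" where
  "Grass l m = {W. W \<subseteq> Vsp m \<and> fsubspace W \<and> fdim W = l}"

text \<open>rep is an admissible choice of representatives omega'_W = v_1 wedge ... wedge v_l,
  with v_1..v_l a basis of W, for each l-dimensional subspace W.\<close>
definition is_rep :: "nat \<Rightarrow> nat \<Rightarrow> ((nat \<Rightarrow> 'a::field) set \<Rightarrow> (nat set \<Rightarrow> 'a)) \<Rightarrow> bool" where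
  "is_rep l m rep \<longleftrightarrow> (\<forall>W \<in> Grass l m. \<exists>vs. length vs = l \<and> distinct vs \<and>
      findependent (set vs) \<and> fspan (set vs) = W \<and> rep W = wedge_list vs)"

definition Tset :: "nat \<Rightarrow> nat \<Rightarrow> ((nat \<Rightarrow> 'a::field) set \<Rightarrow> (nat set \<Rightarrow> 'a)) \<Rightarrow> (nat set \<Rightarrow> 'a) set" where
  "Tset l m rep = rep ` Grass l m"

definition tau :: "nat \<Rightarrow> nat \<Rightarrow> ((nat \<Rightarrow> 'a::field) set \<Rightarrow> (nat set \<Rightarrow> 'a)) \<Rightarrow>
    (nat set \<Rightarrow> 'a) \<Rightarrow> ((nat \<Rightarrow> 'a) set \<Rightarrow> 'a)" where
  "tau l m rep \<omega> = (\<lambda>W. if W \<in> Grass l m then top_coeff m (wedge (rep W) \<omega>) else 0)"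

definition grassmann_code :: "nat \<Rightarrow> nat \<Rightarrow> ((nat \<Rightarrow> 'a::field) set \<Rightarrow> (nat set \<Rightarrow> 'a)) \<Rightarrow>
    ((nat \<Rightarrow> 'a) set \<Rightarrow> 'a) set" where
  "grassmann_code l m rep = tau l m rep ` Ext (m - l) m"

definition supp_size :: "'i set \<Rightarrow> ('i \<Rightarrow> 'a::field) set \<Rightarrow> nat" where
  "supp_size Idx D = card {i \<in> Idx. \<exists>x \<in> D. x i \<noteq> 0}"

definition ghw :: "'i set \<Rightarrow> ('i \<Rightarrow> 'a::field) set \<Rightarrow> nat \<Rightarrow> nat" where
  "ghw Idx C r = Min {supp_size Idx D | D. D \<subseteq> C \<and> fsubspace D \<and> fdim D = r}"

definition gE :: "nat \<Rightarrow> nat \<Rightarrow> ((nat \<Rightarrow> 'a::field) set \<Rightarrow> (nat set \<Rightarrow> 'a)) \<Rightarrow>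
    (nat set \<Rightarrow> 'a) set \<Rightarrow> nat" where
  "gE l m rep E = card (E \<inter> Tset l m rep)"

definition g_s :: "nat \<Rightarrow> nat \<Rightarrow> ((nat \<Rightarrow> 'a::field) set \<Rightarrow> (nat set \<Rightarrow> 'a)) \<Rightarrow> nat \<Rightarrow> nat" where
  "g_s l m rep s = Max {gE l m rep E | E. E \<subseteq> Ext l m \<and> fsubspace E \<and>
      fdim (Ext l m :: (nat set \<Rightarrow> 'a) set) - fdim E = s}"

end

theory Submission
  imports Defs "HOL-Library.FuncSet"
begin


context vector_space begin

lemma dim_insert_fin:
  assumes "finite S"
  shows "dim (insert x S) = (if x \<in> span S then dim S else dim S + 1)"
proof (cases "x \<in> span S")
  case True then show ?thesis
    by (metis dim_span span_redundant)
next
  case False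
  obtain B where B: "B \<subseteq> span S" "independent B" "span S \<subseteq> span B" "card B = dim (span S)"
    using basis_exists [of "span S"] by blast
  have finB: "finite B" using independent_span_bound[OF assms B(2)] B(1) by auto
  have "dim (span (insert x S)) = Suc (dim S)"
  proof (rule dim_unique)
    show "insert x B \<subseteq> span (insert x S)"
      by (meson B(1) insertI1 insert_subset order_trans span_base span_mono subset_insertI)
    show "span (insert x S) \<subseteq> span (insert x B)"
      by (metis \<open>B \<subseteq> span S\<close> \<open>span S \<subseteq> span B\<close> span_breakdown_eq span_subspace subsetI subspace_span)
    show "independent (insert x B)"
      by (metis B(1-3) independent_insert span_subspace subspace_span False)
    show "card (insert x B) = Suc (dim S)"
      using B False finB by force
  qed
  then show ?thesis
    by (metis False Suc_eq_plus1 dim_span)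
qed

lemma indep_card_le_dim_fin:
  assumes "finite V" "B \<subseteq> V" "independent B"
  shows "card B \<le> dim V"
proof -
  obtain C where C: "B \<subseteq> C" "C \<subseteq> V" "independent C" "V \<subseteq> span C"
    using maximal_independent_subset_extend[OF assms(2,3)] by blast
  have "card C = dim V" using basis_card_eq_dim[OF C(2,4,3)] .
  moreover have "finite C" using C(2) assms(1) finite_subset by blast
  ultimately show ?thesis using C(1) card_mono by metis
qed

lemma dim_subset_fin:
  assumes "finite T" "S \<subseteq> T"
  shows "dim S \<le> dim T"
proof -
  obtain B where B: "B \<subseteq> S" "independent B" "S \<subseteq> span B" "card B = dim S"
    using basis_exists by blast
  show ?thesis using indep_card_le_dim_fin[OF assms(1) _ B(2)] B assms(2) by auto
qed

lemma subspace_fin_basis: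
  assumes "subspace U" "finite U"
  obtains B where "finite B" "B \<subseteq> U" "independent B" "span B = U" "card B = dim U"
proof -
  obtain B where B: "B \<subseteq> U" "independent B" "U \<subseteq> span B" "card B = dim U"
    using basis_exists by blast
  have "span B = U" using B assms span_minimal span_eq_iff by (metis span_mono subset_antisym)
  then show ?thesis using that B assms(2) finite_subset by blast
qed

lemma dim0_subspace:
  assumes "subspace U" "finite U" "dim U = 0"
  shows "U = {0}"
proof -
  obtain B where B: "finite B" "B \<subseteq> U" "independent B" "span B = U" "card B = dim U"
    using subspace_fin_basis[OF assms(1,2)] .
  then have "B = {}" using assms(3) by auto
  then show ?thesis using B by auto
qed

end

interpretation FV: vector_space "fscale :: 'a::field \<Rightarrow> ('x \<Rightarrow> 'a) \<Rightarrow> ('x \<Rightarrow> 'a)"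
  by unfold_locales (auto simp: fscale_def algebra_simps fun_eq_iff)

lemma fscale_apply: "fscale c f x = c * f x" by (simp add: fscale_def)

lemma sum_fun_apply: "(sum f A) x = (\<Sum>a\<in>A. f a x)"
  by (induction A rule: infinite_finite_induct) auto

definition Vx :: "'i set \<Rightarrow> ('i \<Rightarrow> 'a::field) set" where
  "Vx X = {u. \<forall>i. i \<notin> X \<longrightarrow> u i = 0}"
definition dot :: "'i set \<Rightarrow> ('i \<Rightarrow> 'a::field) \<Rightarrow> ('i \<Rightarrow> 'a) \<Rightarrow> 'a" where
  "dot X a u = (\<Sum>i\<in>X. a i * u i)"
definition orth :: "'i set \<Rightarrow> ('i \<Rightarrow> 'a::field) set \<Rightarrow> ('i \<Rightarrow> 'a) set" where
  "orth X U = {a \<in> Vx X. \<forall>u\<in>U. dot X a u = 0}"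
definition delta :: "'i \<Rightarrow> ('i \<Rightarrow> 'a::field)" where
  "delta i = (\<lambda>j. if j = i then 1 else 0)"

lemma dot_sym: "dot X a u = dot X u a" by (simp add: dot_def mult.commute)
lemma dot_add_right: "dot X a (u + v) = dot X a u + dot X a v"
  by (simp add: dot_def algebra_simps sum.distrib)
lemma dot_add_left: "dot X (a + b) u = dot X a u + dot X b u"
  by (simp add: dot_def algebra_simps sum.distrib)
lemma dot_diff_right: "dot X a (u - v) = dot X a u - dot X a v"
  by (simp add: dot_def algebra_simps sum_subtractf)
lemma dot_diff_left: "dot X (a - b) u = dot X a u - dot X b u"
  by (simp add: dot_def algebra_simps sum_subtractf)
lemma dot_scale_right: "dot X a (fscale c u) = c * dot X a u"
  by (simp add: dot_def sum_distrib_left algebra_simps fscale_apply)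
lemma dot_scale_left: "dot X (fscale c a) u = c * dot X a u"
  by (simp add: dot_def sum_distrib_left algebra_simps fscale_apply)
lemma dot_zero_right[simp]: "dot X a 0 = 0" by (simp add: dot_def)
lemma dot_zero_left[simp]: "dot X 0 a = 0" by (simp add: dot_def)
lemma dot_delta: "finite X \<Longrightarrow> i \<in> X \<Longrightarrow> dot X (delta i) u = u i"
proof -
  assume "finite X" "i \<in> X"
  have "dot X (delta i) u = (\<Sum>ia\<in>X. if ia = i then u ia else 0)"
    unfolding dot_def delta_def by (rule sum.cong) auto
  then show ?thesis using \<open>finite X\<close> \<open>i \<in> X\<close> by simp
qed

lemma Vx_subspace: "FV.subspace (Vx X)"
  by (auto simp: FV.subspace_def Vx_def fscale_apply)

lemma orth_subspace: "FV.subspace (orth X U)"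
  by (auto simp: FV.subspace_def orth_def Vx_def dot_add_left dot_scale_left fscale_apply)

lemma orth_sub: "orth X U \<subseteq> Vx X" by (auto simp: orth_def)

lemma finite_Vx:
  assumes "finite X"
  shows "finite (Vx X :: ('i \<Rightarrow> 'a::{field,finite}) set)"
proof -
  have "inj_on (\<lambda>u. restrict u X) (Vx X :: ('i \<Rightarrow> 'a) set)"
    by (auto simp: inj_on_def Vx_def restrict_def fun_eq_iff) (metis)
  moreover have "(\<lambda>u. restrict u X) ` (Vx X :: ('i \<Rightarrow> 'a) set) \<subseteq> PiE X (\<lambda>_. UNIV)"
    by auto
  moreover have "finite (PiE X (\<lambda>_. (UNIV :: 'a set)))" using assms by (simp add: finite_PiE)
  ultimately show ?thesis using finite_imageD finite_subset by metis
qed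

lemma delta_in_Vx: "i \<in> X \<Longrightarrow> delta i \<in> Vx X" by (auto simp: Vx_def delta_def)

lemma Vx_span_delta:
  fixes X :: "'i set"
  assumes "finite X"
  shows "(Vx X :: ('i \<Rightarrow> 'a::field) set) \<subseteq> FV.span (delta ` X)"
proof
  fix u :: "'i \<Rightarrow> 'a" assume u: "u \<in> Vx X"
  have "u = (\<Sum>i\<in>X. fscale (u i) (delta i))"
  proof
    fix j
    have "(\<Sum>i\<in>X. fscale (u i) (delta i)) j = (\<Sum>i\<in>X. u i * delta i j)"
      by (simp add: sum_fun_apply fscale_apply)
    also have "\<dots> = (\<Sum>i\<in>X. if j = i then u i else 0)" by (rule sum.cong) (auto simp: delta_def)
    also have "\<dots> = u j" using u assms by (auto simp: Vx_def)
    finally show "u j = (\<Sum>i\<in>X. fscale (u i) (delta i)) j" by simp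
  qed
  also have "\<dots> \<in> FV.span (delta ` X)"
    by (intro FV.span_sum FV.span_scale FV.span_base) auto
  finally show "u \<in> FV.span (delta ` X)" .
qed




lemma orth_antimono: "U \<subseteq> U' \<Longrightarrow> orth X U' \<subseteq> orth X U"
  by (auto simp: orth_def)

lemma orth_orth_sup: "U \<subseteq> Vx X \<Longrightarrow> U \<subseteq> orth X (orth X U)"
  by (auto simp: orth_def dot_sym)

lemma dot_zero_subspace: "FV.subspace {u. dot X x u = 0}"
  by (auto simp: FV.subspace_def dot_add_right dot_scale_right)

lemma orth_span: "orth X (FV.span S) = orth X S"
proof
  show "orth X (FV.span S) \<subseteq> orth X S" using orth_antimono FV.span_superset by blast
  show "orth X S \<subseteq> orth X (FV.span S)"
  proof
    fix a assume a: "a \<in> orth X S"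
    have "FV.span S \<subseteq> {u. dot X a u = 0}"
      by (rule FV.span_minimal) (use a in \<open>auto simp: orth_def intro: dot_zero_subspace\<close>)
    then show "a \<in> orth X (FV.span S)" using a by (auto simp: orth_def)
  qed
qed

lemma inj_delta: "inj (delta :: 'i \<Rightarrow> 'i \<Rightarrow> 'a::field)"
proof (rule injI)
  fix i j :: 'i assume "delta i = (delta j :: 'i \<Rightarrow> 'a)"
  then have "(delta i :: 'i \<Rightarrow> 'a) i = delta j i" by simp
  then show "i = j" by (simp add: delta_def split: if_splits)
qed

lemma sum_delta_image:
  fixes X :: "'i set"
  assumes "finite X" "i \<in> X"
  shows "(\<Sum>x\<in>delta ` X. f x * x i) = (f (delta i) :: 'a::field)"
proof -
  have "(\<Sum>x\<in>delta ` X. f x * x i) = (\<Sum>j\<in>X. f (delta j) * delta j i)"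
  proof -
    have inj: "inj_on (delta :: 'i \<Rightarrow> 'i \<Rightarrow> 'a) X" using inj_delta by (rule inj_on_subset) simp
    show ?thesis by (simp add: sum.reindex[OF inj])
  qed
  also have "\<dots> = (\<Sum>j\<in>X. if j = i then f (delta j) else 0)"
    by (rule sum.cong) (auto simp: delta_def)
  also have "\<dots> = f (delta i)" using assms by simp
  finally show ?thesis .
qed

lemma dim_Vx:
  assumes "finite X"
  shows "FV.dim (Vx X :: ('i \<Rightarrow> 'a::field) set) = card X"
proof -
  have ind: "FV.independent (delta ` X :: ('i \<Rightarrow> 'a) set)"
  proof
    assume "FV.dependent (delta ` X :: ('i \<Rightarrow> 'a) set)"
    then obtain i where i: "i \<in> X" "(delta i :: 'i \<Rightarrow> 'a) \<in> FV.span (delta ` X - {delta i})"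
      unfolding FV.dependent_def by blast
    have sub0: "(delta ` X - {delta i} :: ('i \<Rightarrow> 'a) set) \<subseteq> {u. u i = 0}"
      by (auto simp: delta_def)
    have ssub: "FV.subspace {u :: 'i \<Rightarrow> 'a. u i = 0}"
      by (auto simp: FV.subspace_def fscale_apply)
    have "FV.span (delta ` X - {delta i} :: ('i \<Rightarrow> 'a) set) \<subseteq> {u. u i = 0}"
      by (rule FV.span_minimal[OF sub0 ssub])
    then have "(delta i :: 'i \<Rightarrow> 'a) i = 0" using i(2) by blast
    then show False by (simp add: delta_def)
  qed
  have sub: "delta ` X \<subseteq> (Vx X :: ('i \<Rightarrow> 'a) set)"
    by (rule image_subsetI) (rule delta_in_Vx)
  have inj: "inj_on (delta :: 'i \<Rightarrow> 'i \<Rightarrow> 'a) X" using inj_delta by (rule inj_on_subset) simp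
  have card: "card (delta ` X :: ('i \<Rightarrow> 'a) set) = card X"
    using inj by (rule card_image)
  show ?thesis
    by (rule FV.dim_unique[OF sub Vx_span_delta[OF assms] ind card])
qed

lemma orth_zero:
  assumes "finite X"
  shows "orth X (Vx X) = {0}"
proof -
  have "a = 0" if a: "a \<in> orth X (Vx X)" for a
  proof
    fix i
    show "a i = 0 i"
    proof (cases "i \<in> X")
      case True
      then have "dot X a (delta i) = 0" using a delta_in_Vx[OF True] by (auto simp: orth_def)
      then show ?thesis using True assms dot_delta[of X i a] dot_sym[of X a "delta i"] by simp
    next
      case False then show ?thesis using a by (auto simp: orth_def Vx_def)
    qed
  qed
  moreover have "0 \<in> orth X (Vx X)" by (auto simp: orth_def Vx_def)
  ultimately show ?thesis by blast
qed

lemma orth_duality_aux: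
  fixes X :: "'i set"
  assumes fin: "finite X"
  shows "\<forall>U :: ('i \<Rightarrow> 'a::{field,finite}) set. FV.subspace U \<and> U \<subseteq> Vx X \<and> FV.dim U = d \<longrightarrow>
           FV.dim (orth X U) + d = card X \<and> orth X (orth X U) = U"
proof (induction d)
  case 0
  show ?case
  proof (intro allI impI)
    fix U :: "('i \<Rightarrow> 'a) set" assume U: "FV.subspace U \<and> U \<subseteq> Vx X \<and> FV.dim U = 0"
    have "finite U" using U finite_Vx[OF fin] finite_subset by blast
    then have U0: "U = {0}" using U FV.dim0_subspace by blast
    have o: "orth X U = Vx X" by (auto simp: orth_def U0)
    show "FV.dim (orth X U) + 0 = card X \<and> orth X (orth X U) = U"
      using o orth_zero[OF fin] dim_Vx[OF fin] U0 by simp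
  qed
next
  case (Suc d)
  show ?case
  proof (intro allI impI)
    fix U :: "('i \<Rightarrow> 'a) set" assume U: "FV.subspace U \<and> U \<subseteq> Vx X \<and> FV.dim U = Suc d"
    have finV: "finite (Vx X :: ('i \<Rightarrow> 'a) set)" using finite_Vx[OF fin] .
    have finU: "finite U" using U finV finite_subset by blast
    obtain B where B: "finite B" "B \<subseteq> U" "FV.independent B" "FV.span B = U" "card B = FV.dim U"
      using FV.subspace_fin_basis[of U] U finU by blast
    then obtain b where b: "b \<in> B" using U by fastforce
    define U0 where "U0 = FV.span (B - {b})"
    have indB0: "FV.independent (B - {b})" using B(3) FV.independent_mono by blast
    have dU0: "FV.dim U0 = d"
      unfolding U0_def using FV.dim_span_eq_card_independent[OF indB0] B b U by simp
    have U0U: "U0 \<subseteq> U" unfolding U0_def using B by (metis Diff_subset FV.span_mono)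
    have sU0: "FV.subspace U0" unfolding U0_def by simp
    have bU0: "b \<notin> U0" unfolding U0_def using B(3) b FV.dependent_def by blast
    have bV: "b \<in> Vx X" using B b U by blast
    have UU0: "U = FV.span (insert b U0)"
    proof -
      have s1: "insert b U0 \<subseteq> FV.span (insert b (B - {b}))"
        unfolding U0_def using FV.span_base FV.span_mono[of "B - {b}" "insert b (B - {b})"] by blast
      have s2: "insert b (B - {b}) \<subseteq> FV.span (insert b U0)"
        unfolding U0_def using FV.span_base FV.span_superset[of "B - {b}"] by blast
      have "FV.span (insert b U0) = FV.span (insert b (B - {b}))"
        using FV.span_eq s1 s2 by blast
      also have "insert b (B - {b}) = B" using b by blast
      finally show ?thesis using B by simp
    qed
    have IH: "FV.dim (orth X U0) + d = card X" "orth X (orth X U0) = U0"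
      using Suc.IH sU0 U0U U dU0 by blast+
    have "b \<notin> orth X (orth X U0)" using bU0 IH(2) by simp
    then have "\<exists>a\<in>orth X U0. dot X b a \<noteq> 0" using bV unfolding orth_def[of X "orth X U0"] by blast
    then obtain a where a: "a \<in> orth X U0" "dot X a b \<noteq> 0" using dot_sym by metis
    define S where "S = orth X U"
    have S_eq: "S = {x \<in> orth X U0. dot X x b = 0}"
    proof -
      have "S = orth X (insert b U0)" unfolding S_def UU0 orth_span ..
      then show ?thesis by (auto simp: orth_def)
    qed
    have aS: "a \<notin> S" using a S_eq by auto
    have sS: "FV.subspace S" unfolding S_def by (rule orth_subspace)
    have finS: "finite S" using S_def orth_sub finV finite_subset by metis
    have decomp: "z - fscale (dot X z b / dot X a b) a \<in> S" if z: "z \<in> orth X U0" for z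
    proof -
      have "z - fscale (dot X z b / dot X a b) a \<in> orth X U0"
        using z a(1) orth_subspace[of X U0]
        by (simp add: FV.subspace_diff FV.subspace_scale)
      moreover have "dot X (z - fscale (dot X z b / dot X a b) a) b = 0"
        using a(2) by (simp add: dot_diff_left dot_scale_left)
      ultimately show ?thesis using S_eq by blast
    qed
    have oU0: "orth X U0 = FV.span (insert a S)"
    proof
      show "FV.span (insert a S) \<subseteq> orth X U0"
        by (rule FV.span_minimal) (use a S_eq orth_subspace in auto)
      show "orth X U0 \<subseteq> FV.span (insert a S)"
      proof
        fix z assume z: "z \<in> orth X U0"
        have "z = (z - fscale (dot X z b / dot X a b) a) + fscale (dot X z b / dot X a b) a" by simp
        also have "\<dots> \<in> FV.span (insert a S)"
          using decomp[OF z]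
          by (intro FV.span_add FV.span_scale) (auto intro: FV.span_base)
        finally show "z \<in> FV.span (insert a S)" .
      qed
    qed
    have "FV.dim (orth X U0) = FV.dim S + 1"
    proof -
      have sp: "FV.span S = S" using sS FV.span_eq_iff by blast
      have "a \<notin> FV.span S" by (subst sp) (rule aS)
      then show ?thesis using FV.dim_insert_fin[OF finS, of a] by (simp add: oU0)
    qed
    then have dimS: "FV.dim (orth X U) + Suc d = card X" using IH(1) S_def by simp
    have "orth X (orth X U) \<subseteq> U"
    proof
      fix x assume x: "x \<in> orth X (orth X U)"
      define c where "c = dot X a x / dot X a b"
      define x' where "x' = x - fscale c b"
      have xV: "x \<in> Vx X" using x orth_sub by blast
      have x'V: "x' \<in> Vx X" unfolding x'_def
        by (rule FV.subspace_diff[OF Vx_subspace xV FV.subspace_scale[OF Vx_subspace bV]])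
      have "dot X z x' = 0" if z: "z \<in> orth X U0" for z
      proof -
        define t where "t = dot X z b / dot X a b"
        have zt: "z - fscale t a \<in> S" using decomp[OF z] t_def by simp
        have e1: "dot X (z - fscale t a) x = 0" using zt x S_def by (auto simp: orth_def dot_sym)
        have e2: "dot X (z - fscale t a) b = 0" using zt S_eq by auto
        have e3: "dot X a x' = 0" unfolding x'_def c_def using a(2)
          by (simp add: dot_diff_right dot_scale_right)
        have "dot X (z - fscale t a) x' = 0" unfolding x'_def
          using e1 e2 by (simp add: dot_diff_right dot_scale_right)
        then have "dot X z x' - t * dot X a x' = 0" by (simp add: dot_diff_left dot_scale_left)
        then show ?thesis using e3 by simp
      qed
      then have "x' \<in> orth X (orth X U0)" using x'V by (auto simp: orth_def dot_sym)
      then have "x' \<in> U0" using IH(2) by simp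
      then have "x' + fscale c b \<in> FV.span (insert b U0)"
        by (intro FV.span_add FV.span_scale) (auto intro: FV.span_base)
      moreover have "x' + fscale c b = x" unfolding x'_def by simp
      ultimately show "x \<in> U" using UU0 by simp
    qed
    then have "orth X (orth X U) = U" using orth_orth_sup U by blast
    then show "FV.dim (orth X U) + Suc d = card X \<and> orth X (orth X U) = U" using dimS by simp
  qed
qed

lemma orth_duality:
  fixes X :: "'i set" and U :: "('i \<Rightarrow> 'a::{field,finite}) set"
  assumes "finite X" "FV.subspace U" "U \<subseteq> Vx X"
  shows "FV.dim (orth X U) + FV.dim U = card X" "orth X (orth X U) = U"
proof -
  have "FV.subspace U \<and> U \<subseteq> Vx X \<and> FV.dim U = FV.dim U \<longrightarrow>
           FV.dim (orth X U) + FV.dim U = card X \<and> orth X (orth X U) = U"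
    by (rule spec[OF orth_duality_aux[OF assms(1), of "FV.dim U"], of U])
  then have "FV.dim (orth X U) + FV.dim U = card X \<and> orth X (orth X U) = U"
    using assms(2,3) by blast
  then show "FV.dim (orth X U) + FV.dim U = card X" "orth X (orth X U) = U" by auto
qed




lemma FV_vs: "vector_space (fscale :: 'a::field \<Rightarrow> ('x \<Rightarrow> 'a) \<Rightarrow> ('x \<Rightarrow> 'a))"
  by (rule FV.vector_space_axioms)

definition cw :: "'i set \<Rightarrow> 'g set \<Rightarrow> ('g \<Rightarrow> ('i \<Rightarrow> 'a::field)) \<Rightarrow> ('i \<Rightarrow> 'a) \<Rightarrow> ('g \<Rightarrow> 'a)" where
  "cw X G r u = (\<lambda>W. if W \<in> G then dot X (r W) u else 0)"

lemma cw_linear: "Vector_Spaces.linear fscale fscale (cw X G r)"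
  unfolding Vector_Spaces.linear_iff
  by (auto simp: FV_vs cw_def fun_eq_iff dot_add_right dot_scale_right fscale_apply)

lemma cw_mh: "module_hom fscale fscale (cw X G r)"
  using cw_linear module_hom_iff_linear by blast

lemma dot_zero_subspace_left: "FV.subspace {a. dot X a w = 0}"
  by (auto simp: FV.subspace_def dot_add_left dot_scale_left)

lemma indep_delta:
  fixes X :: "'i set"
  shows "FV.independent (delta ` X :: ('i \<Rightarrow> 'a::field) set)"
proof
  assume "FV.dependent (delta ` X :: ('i \<Rightarrow> 'a) set)"
  then obtain i where i: "i \<in> X" "(delta i :: 'i \<Rightarrow> 'a) \<in> FV.span (delta ` X - {delta i})"
    unfolding FV.dependent_def by blast
  have sub0: "(delta ` X - {delta i} :: ('i \<Rightarrow> 'a) set) \<subseteq> {u. u i = 0}"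
    by (auto simp: delta_def)
  have ssub: "FV.subspace {u :: 'i \<Rightarrow> 'a. u i = 0}"
    by (auto simp: FV.subspace_def fscale_apply)
  have "FV.span (delta ` X - {delta i} :: ('i \<Rightarrow> 'a) set) \<subseteq> {u. u i = 0}"
    by (rule FV.span_minimal[OF sub0 ssub])
  then have "(delta i :: 'i \<Rightarrow> 'a) i = 0" using i(2) by blast
  then show False by (simp add: delta_def)
qed

lemma cw_inj:
  fixes X :: "'i set" and G :: "'g set" and r :: "'g \<Rightarrow> ('i \<Rightarrow> 'a::field)"
  assumes finX: "finite X" and sp: "Vx X \<subseteq> FV.span (r ` G)"
  shows "inj_on (cw X G r) (Vx X)"
proof (rule inj_onI)
  fix u v assume u: "u \<in> Vx X" and v: "v \<in> Vx X" and e: "cw X G r u = cw X G r v"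
  define w where "w = u - v"
  have zero: "dot X (r W) w = 0" if "W \<in> G" for W
  proof -
    have "cw X G r u W = cw X G r v W" using e by simp
    then show ?thesis using that by (simp add: cw_def w_def dot_diff_right)
  qed
  have "r ` G \<subseteq> {a. dot X a w = 0}" using zero by blast
  then have spz: "FV.span (r ` G) \<subseteq> {a. dot X a w = 0}"
    by (rule FV.span_minimal[OF _ dot_zero_subspace_left])
  have "w i = 0" for i
  proof (cases "i \<in> X")
    case True
    have "delta i \<in> Vx X" using True by (rule delta_in_Vx)
    then have "dot X (delta i) w = 0" using sp spz by blast
    then show ?thesis using dot_delta[OF finX True, of w] by simp
  next
    case False then show ?thesis using u v by (simp add: w_def Vx_def)
  qed
  then have "w = 0" by (simp add: fun_eq_iff)
  then show "u = v" by (simp add: w_def)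
qed

lemma cw_dim:
  fixes X :: "'i set" and G :: "'g set" and r :: "'g \<Rightarrow> ('i \<Rightarrow> 'a::{field,finite})"
  assumes finX: "finite X" and injc: "inj_on (cw X G r) (Vx X)"
    and U: "FV.subspace U" "U \<subseteq> Vx X"
  shows "FV.dim (cw X G r ` U) = FV.dim U" "FV.subspace (cw X G r ` U)"
proof -
  have finU: "finite U" using U finite_Vx[OF finX] finite_subset by blast
  obtain B where B: "finite B" "B \<subseteq> U" "FV.independent B" "FV.span B = U" "card B = FV.dim U"
    using FV.subspace_fin_basis[OF U(1) finU] by blast
  have injB: "inj_on (cw X G r) (FV.span B)" using B(4) U(2) injc inj_on_subset by metis
  have ind: "FV.independent (cw X G r ` B)"
    by (rule module_hom.independent_injective_image[OF cw_mh B(3) injB])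
  have spi: "FV.span (cw X G r ` B) = cw X G r ` U"
    using module_hom.span_image[OF cw_mh[of X G r], of B] B(4) by simp
  have "FV.dim (cw X G r ` U) = card (cw X G r ` B)"
  proof (rule FV.dim_eq_card)
    show "FV.span (cw X G r ` B) = FV.span (cw X G r ` U)"
      using spi FV.span_span by metis
    show "FV.independent (cw X G r ` B)" by (rule ind)
  qed
  also have "\<dots> = card B" using injB FV.span_superset card_image inj_on_subset by metis
  finally show "FV.dim (cw X G r ` U) = FV.dim U" using B(5) by simp
  show "FV.subspace (cw X G r ` U)" by (rule module_hom.subspace_image[OF cw_mh U(1)])
qed

lemma cw_supp:
  fixes X :: "'i set" and G :: "'g set" and r :: "'g \<Rightarrow> ('i \<Rightarrow> 'a::field)"
  assumes finG: "finite G" and rV: "r ` G \<subseteq> Vx X" and inj: "inj_on r G"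
  shows "supp_size G (cw X G r ` U) = card G - card (orth X U \<inter> r ` G)"
proof -
  define A where "A = {W \<in> G. r W \<in> orth X U}"
  have eq: "{W \<in> G. \<exists>x \<in> cw X G r ` U. x W \<noteq> 0} = G - A"
    using rV by (auto simp: A_def orth_def cw_def)
  have AG: "A \<subseteq> G" by (auto simp: A_def)
  have "card (G - A) = card G - card A"
    using card_Diff_subset[OF finite_subset[OF AG finG] AG] .
  moreover have "card A = card (r ` A)" using inj AG card_image inj_on_subset by metis
  moreover have "r ` A = orth X U \<inter> r ` G" by (auto simp: A_def)
  ultimately show ?thesis unfolding supp_size_def eq by simp
qed

lemma Min_diff_Max:
  fixes g :: "'e \<Rightarrow> nat"
  assumes "finite Es" "Es \<noteq> {}"
  shows "Min ((\<lambda>E. n - g E) ` Es) = n - Max (g ` Es)"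
proof -
  have "Max (g ` Es) \<in> g ` Es" using assms by (intro Max_in) auto
  then obtain E0 where E0: "E0 \<in> Es" "g E0 = Max (g ` Es)" by auto
  show ?thesis
  proof (rule Min_eqI)
    show "finite ((\<lambda>E. n - g E) ` Es)" using assms by simp
    show "n - Max (g ` Es) \<in> (\<lambda>E. n - g E) ` Es" using E0 by force
    fix y assume "y \<in> (\<lambda>E. n - g E) ` Es"
    then obtain E where "E \<in> Es" "y = n - g E" by auto
    moreover have "g E \<le> Max (g ` Es)" using assms \<open>E \<in> Es\<close> by (intro Max_ge) auto
    ultimately show "n - Max (g ` Es) \<le> y" by simp
  qed
qed

lemma code_ghw:
  fixes X :: "'i set" and G :: "'g set" and r :: "'g \<Rightarrow> ('i \<Rightarrow> 'a::{field,finite})"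
  assumes finX: "finite X" and finG: "finite G"
    and rV: "r ` G \<subseteq> Vx X" and inj: "inj_on r G" and sp: "Vx X \<subseteq> FV.span (r ` G)"
    and s: "s \<le> card X"
  shows "ghw G (cw X G r ` Vx X) s = card G - Max {card (E \<inter> r ` G) | E. E \<subseteq> Vx X \<and> FV.subspace E \<and> FV.dim (Vx X :: ('i \<Rightarrow> 'a) set) - FV.dim E = s}"
proof -
  define Es where "Es = {E :: ('i \<Rightarrow> 'a) set. E \<subseteq> Vx X \<and> FV.subspace E \<and> FV.dim (Vx X :: ('i \<Rightarrow> 'a) set) - FV.dim E = s}"
  define gg where "gg E = card (E \<inter> r ` G)" for E
  have injc: "inj_on (cw X G r) (Vx X)" by (rule cw_inj[OF finX sp])
  have dV: "FV.dim (Vx X :: ('i \<Rightarrow> 'a) set) = card X" by (rule dim_Vx[OF finX])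
  have finV: "finite (Vx X :: ('i \<Rightarrow> 'a) set)" by (rule finite_Vx[OF finX])
  have L: "{supp_size G D | D. D \<subseteq> cw X G r ` Vx X \<and> FV.subspace D \<and> FV.dim D = s}
        = (\<lambda>E. card G - gg E) ` Es"
  proof (intro equalityI subsetI)
    fix y assume "y \<in> {supp_size G D | D. D \<subseteq> cw X G r ` Vx X \<and> FV.subspace D \<and> FV.dim D = s}"
    then obtain D where D: "y = supp_size G D" "D \<subseteq> cw X G r ` Vx X" "FV.subspace D" "FV.dim D = s"
      by blast
    define U where "U = Vx X \<inter> cw X G r -` D"
    have sU: "FV.subspace U" unfolding U_def
      by (rule FV.subspace_inter[OF Vx_subspace module_hom.subspace_vimage[OF cw_mh D(3)]])
    have UV: "U \<subseteq> Vx X" by (auto simp: U_def)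
    have cU: "cw X G r ` U = D" using D(2) by (auto simp: U_def)
    have dU: "FV.dim U = s" using cw_dim(1)[OF finX injc sU UV] cU D(4) by simp
    have od: "FV.dim (orth X U) + FV.dim U = card X" by (rule orth_duality(1)[OF finX sU UV])
    have "orth X U \<in> Es" unfolding Es_def using orth_sub orth_subspace od dU dV by auto
    moreover have "y = card G - gg (orth X U)"
      using D(1) cU cw_supp[OF finG rV inj, of U] by (simp add: gg_def)
    ultimately show "y \<in> (\<lambda>E. card G - gg E) ` Es" by blast
  next
    fix y assume "y \<in> (\<lambda>E. card G - gg E) ` Es"
    then obtain E :: "('i \<Rightarrow> 'a) set" where E: "y = card G - gg E" "E \<subseteq> Vx X" "FV.subspace E" "FV.dim (Vx X :: ('i \<Rightarrow> 'a) set) - FV.dim E = s"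
      unfolding Es_def by blast
    have dE: "FV.dim E \<le> card X" using FV.dim_subset_fin[OF finV E(2)] dV by simp
    define U where "U = orth X E"
    have od: "FV.dim U + FV.dim E = card X" "orth X U = E"
      unfolding U_def using orth_duality[OF finX E(3) E(2)] by auto
    have sU: "FV.subspace U" unfolding U_def by (rule orth_subspace)
    have UV: "U \<subseteq> Vx X" unfolding U_def by (rule orth_sub)
    have dU: "FV.dim U = s" using od(1) dE E(4) dV s by simp
    define D where "D = cw X G r ` U"
    have "D \<subseteq> cw X G r ` Vx X" unfolding D_def using UV by blast
    moreover have "FV.subspace D" unfolding D_def by (rule cw_dim(2)[OF finX injc sU UV])
    moreover have "FV.dim D = s" unfolding D_def using cw_dim(1)[OF finX injc sU UV] dU by simp
    moreover have "y = supp_size G D"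
      using E(1) cw_supp[OF finG rV inj, of U] od(2) by (simp add: gg_def D_def)
    ultimately show "y \<in> {supp_size G D | D. D \<subseteq> cw X G r ` Vx X \<and> FV.subspace D \<and> FV.dim D = s}"
      by blast
  qed
  have finEs: "finite Es"
  proof -
    have "Es \<subseteq> Pow (Vx X)" by (auto simp: Es_def)
    then show ?thesis using finV finite_subset by blast
  qed
  have neEs: "Es \<noteq> {}"
  proof -
    obtain Y where Y: "Y \<subseteq> X" "card Y = card X - s"
      using obtain_subset_with_card_n[of "card X - s" X] by auto
    define E0 where "E0 = FV.span (delta ` Y :: ('i \<Rightarrow> 'a) set)"
    have indY: "FV.independent (delta ` Y :: ('i \<Rightarrow> 'a) set)" by (rule indep_delta)
    have injY: "inj_on (delta :: 'i \<Rightarrow> 'i \<Rightarrow> 'a) Y" using inj_delta by (rule inj_on_subset) simp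
    have "FV.dim E0 = card (delta ` Y :: ('i \<Rightarrow> 'a) set)"
      unfolding E0_def by (rule FV.dim_span_eq_card_independent[OF indY])
    also have "\<dots> = card Y" by (rule card_image[OF injY])
    finally have dE0: "FV.dim E0 = card X - s" using Y by simp
    have "delta ` Y \<subseteq> (Vx X :: ('i \<Rightarrow> 'a) set)"
      using Y(1) by (intro image_subsetI delta_in_Vx) blast
    then have "E0 \<subseteq> Vx X" unfolding E0_def by (rule FV.span_minimal[OF _ Vx_subspace])
    moreover have "FV.subspace E0" unfolding E0_def by simp
    ultimately have "E0 \<in> Es" unfolding Es_def using dE0 dV s by auto
    then show ?thesis by blast
  qed
  have "ghw G (cw X G r ` Vx X) s = Min ((\<lambda>E. card G - gg E) ` Es)"
    unfolding ghw_def L ..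
  also have "\<dots> = card G - Max (gg ` Es)" by (rule Min_diff_Max[OF finEs neEs])
  also have "gg ` Es = {card (E \<inter> r ` G) | E. E \<subseteq> Vx X \<and> FV.subspace E \<and> FV.dim (Vx X :: ('i \<Rightarrow> 'a) set) - FV.dim E = s}"
    by (simp only: gg_def Es_def image_Collect)
  finally show ?thesis .
qed




lemma wedge_inf: "infinite K \<Longrightarrow> wedge a b K = 0"
  by (simp add: wedge_def)

definition sg :: "nat set \<Rightarrow> nat \<Rightarrow> 'a::field" where
  "sg K i = (-1) ^ card {j \<in> K. j < i}"

lemma sg_nz: "sg K i \<noteq> 0" by (simp add: sg_def)

lemma vec1_single: "vec1 v {i} = v i" by (simp add: vec1_def)

lemma wedge_vec1:
  assumes fin: "finite K"
  shows "wedge (vec1 v) Y K = (\<Sum>i\<in>K. sg K i * v i * Y (K - {i}))"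
proof -
  define g where "g I = (-1) ^ card {(i, j). i \<in> I \<and> j \<in> K - I \<and> j < i} * vec1 v I * Y (K - I)" for I
  have "wedge (vec1 v) Y K = sum g (Pow K)" by (simp add: wedge_def g_def)
  also have "\<dots> = sum g ((\<lambda>i. {i}) ` K)"
  proof (rule sum.mono_neutral_right)
    show "finite (Pow K)" using fin by simp
    show "(\<lambda>i. {i}) ` K \<subseteq> Pow K" by auto
    show "\<forall>I\<in>Pow K - (\<lambda>i. {i}) ` K. g I = 0"
    proof
      fix I assume I: "I \<in> Pow K - (\<lambda>i. {i}) ` K"
      have "card I \<noteq> 1"
      proof
        assume "card I = 1"
        then obtain x where "I = {x}" by (rule card_1_singletonE)
        then show False using I by auto
      qed
      then show "g I = 0" by (simp add: g_def vec1_def)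
    qed
  qed
  also have "\<dots> = (\<Sum>i\<in>K. g {i})" by (rule sum.reindex_cong[of "\<lambda>i. {i}"]) (auto simp: inj_on_def)
  also have "\<dots> = (\<Sum>i\<in>K. sg K i * v i * Y (K - {i}))"
  proof (rule sum.cong[OF refl])
    fix i assume i: "i \<in> K"
    have "{(i', j). i' \<in> {i} \<and> j \<in> K - {i} \<and> j < i'} = (\<lambda>j. (i, j)) ` {j \<in> K. j < i}"
      by auto
    then have "card {(i', j). i' \<in> {i} \<and> j \<in> K - {i} \<and> j < i'} = card {j \<in> K. j < i}"
      by (simp add: card_image inj_on_def)
    then show "g {i} = sg K i * v i * Y (K - {i})" by (simp add: g_def sg_def vec1_single)
  qed
  finally show ?thesis .
qed

lemma wedge_add_left: "wedge (a + b) c = wedge a c + wedge b c"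
  by (simp add: wedge_def fun_eq_iff algebra_simps sum.distrib)
lemma wedge_add_right: "wedge a (b + c) = wedge a b + wedge a c"
  by (simp add: wedge_def fun_eq_iff algebra_simps sum.distrib)
lemma wedge_scale_left: "wedge (fscale t a) c = fscale t (wedge a c)"
  by (simp add: wedge_def fun_eq_iff algebra_simps sum_distrib_left fscale_apply)
lemma wedge_scale_right: "wedge a (fscale t c) = fscale t (wedge a c)"
  by (simp add: wedge_def fun_eq_iff algebra_simps sum_distrib_left fscale_apply)
lemma wedge_zero_left[simp]: "wedge 0 c = 0"
  by (simp add: wedge_def fun_eq_iff)
lemma wedge_zero_right[simp]: "wedge a 0 = 0"
  by (simp add: wedge_def fun_eq_iff)
lemma wedge_diff_right: "wedge a (b - c) = wedge a b - wedge a c"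
  by (simp add: wedge_def fun_eq_iff algebra_simps sum_subtractf)
lemma wedge_diff_left: "wedge (a - b) c = wedge a c - wedge b c"
  by (simp add: wedge_def fun_eq_iff algebra_simps sum_subtractf)
lemma wedge_neg_right: "wedge a (- c) = - wedge a c"
  by (simp add: wedge_def fun_eq_iff algebra_simps sum_negf)
lemma vec1_add: "vec1 (v + w) = vec1 v + vec1 w"
  by (simp add: vec1_def fun_eq_iff)
lemma vec1_scale: "vec1 (fscale t v) = fscale t (vec1 v)"
  by (simp add: vec1_def fun_eq_iff fscale_apply)
lemma vec1_zero[simp]: "vec1 0 = 0"
  by (simp add: vec1_def fun_eq_iff)
lemma vec1_diff: "vec1 (v - w) = vec1 v - vec1 w"
  by (simp add: vec1_def fun_eq_iff)

lemma antisym_sum_zero: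
  fixes f :: "nat \<Rightarrow> nat \<Rightarrow> 'a::comm_ring"
  assumes fin: "finite K" and anti: "\<And>i j. i \<in> K \<Longrightarrow> j \<in> K \<Longrightarrow> i < j \<Longrightarrow> f j i = - f i j"
  shows "(\<Sum>i\<in>K. \<Sum>j\<in>K - {i}. f i j) = 0"
proof -
  define P1 where "P1 = {(i, j). i \<in> K \<and> j \<in> K \<and> i < j}"
  define P2 where "P2 = {(i, j). i \<in> K \<and> j \<in> K \<and> j < i}"
  have finP: "finite P1" "finite P2"
    using fin by (auto simp: P1_def P2_def intro: finite_subset[of _ "K \<times> K"])
  have "(\<Sum>i\<in>K. \<Sum>j\<in>K - {i}. f i j) = (\<Sum>(i, j)\<in>Sigma K (\<lambda>i. K - {i}). f i j)"
    using fin by (simp add: sum.Sigma)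
  also have "Sigma K (\<lambda>i. K - {i}) = P1 \<union> P2" by (auto simp: P1_def P2_def)
  also have "(\<Sum>(i, j)\<in>P1 \<union> P2. f i j) = (\<Sum>(i, j)\<in>P1. f i j) + (\<Sum>(i, j)\<in>P2. f i j)"
    by (rule sum.union_disjoint) (use finP in \<open>auto simp: P1_def P2_def\<close>)
  also have "(\<Sum>(i, j)\<in>P2. f i j) = (\<Sum>(i, j)\<in>P1. f j i)"
  proof -
    have "P2 = prod.swap ` P1" by (auto simp: P1_def P2_def image_def)
    moreover have "inj_on prod.swap P1" by (metis inj_on_def swap_swap)
    ultimately show ?thesis by (simp add: sum.reindex case_prod_beta comp_def)
  qed
  also have "(\<Sum>(i, j)\<in>P1. f j i) = (\<Sum>(i, j)\<in>P1. - f i j)"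
    by (rule sum.cong) (auto simp: P1_def anti)
  also have "(\<Sum>(i, j)\<in>P1. - f i j) = - (\<Sum>(i, j)\<in>P1. f i j)"
    by (simp add: case_prod_beta sum_negf)
  finally show ?thesis by simp
qed

lemma sg_swap:
  assumes "finite K" "i \<in> K" "j \<in> K" "i < j"
  shows "(sg K j * sg (K - {j}) i :: 'a::field) = - (sg K i * sg (K - {i}) j)"
proof -
  have e1: "{x \<in> K - {j}. x < i} = {x \<in> K. x < i}" using assms by auto
  have e2: "{x \<in> K. x < j} = insert i {x \<in> K - {i}. x < j}" using assms by auto
  have fin2: "finite {x \<in> K - {i}. x < j}" using assms by simp
  have c2: "card {x \<in> K. x < j} = Suc (card {x \<in> K - {i}. x < j})"
    using e2 fin2 by simp
  show ?thesis unfolding sg_def e1 c2 by simp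
qed

lemma wedge_vec1_twice: "wedge (vec1 v) (wedge (vec1 v) Y) = 0"
proof
  fix K
  show "wedge (vec1 v) (wedge (vec1 v) Y) K = 0 K"
  proof (cases "finite K")
    case False then show ?thesis by (simp add: wedge_inf)
  next
    case fin: True
    define f where "f i j = sg K i * sg (K - {i}) j * v i * v j * Y (K - {i} - {j})" for i j
    have "wedge (vec1 v) (wedge (vec1 v) Y) K =
          (\<Sum>i\<in>K. sg K i * v i * (\<Sum>j\<in>K - {i}. sg (K - {i}) j * v j * Y (K - {i} - {j})))"
      using fin by (simp add: wedge_vec1)
    also have "\<dots> = (\<Sum>i\<in>K. \<Sum>j\<in>K - {i}. f i j)"
      by (simp add: f_def sum_distrib_left algebra_simps)
    also have "\<dots> = 0"
    proof (rule antisym_sum_zero[OF fin])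
      fix i j assume ij: "i \<in> K" "j \<in> K" "i < j"
      have Y: "K - {j} - {i} = K - {i} - {j}" by auto
      show "f j i = - f i j"
        unfolding f_def Y using sg_swap[OF fin ij, where 'a='a]
        by (simp add: algebra_simps)
    qed
    finally show ?thesis by simp
  qed
qed

lemma wedge_vec1_anti:
  "wedge (vec1 v) (wedge (vec1 w) Y) = - wedge (vec1 w) (wedge (vec1 v) Y)"
proof -
  have "0 = wedge (vec1 (v + w)) (wedge (vec1 (v + w)) Y)" by (simp add: wedge_vec1_twice)
  also have "\<dots> = wedge (vec1 v) (wedge (vec1 v) Y) + wedge (vec1 v) (wedge (vec1 w) Y)
      + (wedge (vec1 w) (wedge (vec1 v) Y) + wedge (vec1 w) (wedge (vec1 w) Y))"
    by (simp add: vec1_add wedge_add_left wedge_add_right)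
  also have "\<dots> = wedge (vec1 v) (wedge (vec1 w) Y) + wedge (vec1 w) (wedge (vec1 v) Y)"
    by (simp add: wedge_vec1_twice)
  finally show ?thesis by (simp add: eq_neg_iff_add_eq_0)
qed

lemma wedge_list_Cons: "wedge_list (v # vs) = wedge (vec1 v) (wedge_list vs)"
  by (simp add: wedge_list_def)
lemma wedge_list_Nil: "wedge_list [] = ext_one"
  by (simp add: wedge_list_def)

lemma wedge_list_mem: "u \<in> set vs \<Longrightarrow> wedge (vec1 u) (wedge_list vs) = 0"
proof (induction vs)
  case Nil then show ?case by simp
next
  case (Cons h t)
  show ?case
  proof (cases "u = h")
    case True then show ?thesis by (simp add: wedge_list_Cons wedge_vec1_twice)
  next
    case False
    then have "u \<in> set t" using Cons.prems by simp
    then have "wedge (vec1 u) (wedge_list t) = 0" by (rule Cons.IH)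
    then show ?thesis by (simp add: wedge_list_Cons wedge_vec1_anti[of u h])
  qed
qed

lemma wedge_list_span:
  assumes "u \<in> FV.span (set vs)"
  shows "wedge (vec1 u) (wedge_list vs) = 0"
proof -
  have ss: "FV.subspace {u. wedge (vec1 u) (wedge_list vs) = 0}"
    by (auto simp: FV.subspace_def vec1_add wedge_add_left vec1_scale wedge_scale_left)
  have "set vs \<subseteq> {u. wedge (vec1 u) (wedge_list vs) = 0}" using wedge_list_mem by blast
  then have "FV.span (set vs) \<subseteq> {u. wedge (vec1 u) (wedge_list vs) = 0}"
    by (rule FV.span_minimal[OF _ ss])
  then show ?thesis using assms by blast
qed

lemma wedge_list_support:
  assumes "\<forall>v\<in>set vs. \<forall>i. i \<notin> S \<longrightarrow> v i = 0" "wedge_list vs K \<noteq> 0"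
  shows "finite K \<and> K \<subseteq> S \<and> card K = length vs"
  using assms
proof (induction vs arbitrary: K)
  case Nil
  then have "K = {}" by (simp add: wedge_list_Nil ext_one_def split: if_splits)
  then show ?case by simp
next
  case (Cons v vs)
  have fin: "finite K" using Cons.prems(2) wedge_inf by (fastforce simp: wedge_list_Cons)
  have "(\<Sum>i\<in>K. sg K i * v i * wedge_list vs (K - {i})) \<noteq> 0"
    using Cons.prems(2) fin by (simp add: wedge_list_Cons wedge_vec1)
  then obtain i where i: "i \<in> K" "sg K i * v i * wedge_list vs (K - {i}) \<noteq> 0"
    using sum.not_neutral_contains_not_neutral by blast
  have vi: "v i \<noteq> 0" "wedge_list vs (K - {i}) \<noteq> 0" using i(2) by auto
  have iS: "i \<in> S" using vi(1) Cons.prems(1) by auto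
  have IH: "finite (K - {i}) \<and> K - {i} \<subseteq> S \<and> card (K - {i}) = length vs"
    using Cons.IH[of "K - {i}"] Cons.prems(1) vi(2) by simp
  have "card K = Suc (card (K - {i}))" using card_Suc_Diff1[OF fin i(1)] by simp
  then show ?case using IH iS fin by auto
qed

lemma wedge_list_elim:
  "wedge (vec1 v) (wedge_list (map (\<lambda>r. r - fscale (f r) v) rs)) = wedge (vec1 v) (wedge_list rs)"
proof (induction rs)
  case Nil then show ?case by simp
next
  case (Cons r rs)
  let ?rs' = "map (\<lambda>r. r - fscale (f r) v) rs"
  let ?Z = "wedge_list ?rs'"
  have e1: "wedge (vec1 (r - fscale (f r) v)) ?Z = wedge (vec1 r) ?Z - fscale (f r) (wedge (vec1 v) ?Z)"
    by (simp only: vec1_diff vec1_scale wedge_diff_left wedge_scale_left)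
  have e2: "wedge (vec1 v) (wedge (vec1 r) ?Z - fscale (f r) (wedge (vec1 v) ?Z)) = wedge (vec1 v) (wedge (vec1 r) ?Z)"
    by (simp only: wedge_diff_right wedge_scale_right wedge_vec1_twice) (simp add: fscale_def fun_eq_iff)
  have "wedge (vec1 v) (wedge_list (map (\<lambda>r. r - fscale (f r) v) (r # rs)))
      = wedge (vec1 v) (wedge (vec1 (r - fscale (f r) v)) ?Z)"
    by (simp only: list.map wedge_list_Cons)
  also have "\<dots> = wedge (vec1 v) (wedge (vec1 r) ?Z)" by (simp only: e1 e2)
  also have "\<dots> = - wedge (vec1 r) (wedge (vec1 v) (wedge_list ?rs'))" by (rule wedge_vec1_anti)
  also have "\<dots> = - wedge (vec1 r) (wedge (vec1 v) (wedge_list rs))" by (simp only: Cons.IH)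
  also have "\<dots> = wedge (vec1 v) (wedge (vec1 r) (wedge_list rs))" by (simp add: wedge_vec1_anti[of v r])
  finally show ?case by (simp only: wedge_list_Cons)
qed


lemma wedge_list_nonzero:
  assumes "FV.dim (set vs) = length vs"
  shows "wedge_list vs \<noteq> (0 :: nat set \<Rightarrow> 'a::field)"
  using assms
proof (induction "length vs" arbitrary: vs)
  case 0
  then have "vs = []" by simp
  then show ?case by (simp add: wedge_list_Nil ext_one_def fun_eq_iff)
next
  case (Suc n)
  then obtain v rest where vs: "vs = v # rest" by (cases vs) auto
  have len: "length rest = n" using Suc.hyps(2) vs by simp
  define S where "S = set rest"
  have finS: "finite S" by (simp add: S_def)
  have dS: "FV.dim S \<le> length rest"
    using FV.dim_le_card'[OF finS] card_length[of rest] unfolding S_def by linarith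
  have dins: "FV.dim (insert v S) = length rest + 1" using Suc.prems vs by (simp add: S_def)
  have vS: "v \<notin> FV.span S"
  proof
    assume "v \<in> FV.span S"
    then have "FV.dim (insert v S) = FV.dim S" using FV.dim_insert_fin[OF finS] by simp
    then show False using dins dS by simp
  qed
  have "v \<noteq> 0" using vS FV.span_zero by metis
  then obtain p where p: "v p \<noteq> 0" by (auto simp: fun_eq_iff)
  define rest' where "rest' = map (\<lambda>r. r - fscale (r p / v p) v) rest"
  have rp: "\<forall>r'\<in>set rest'. \<forall>i. i \<notin> UNIV - {p} \<longrightarrow> r' i = 0"
    using p by (auto simp: rest'_def fscale_apply)
  have s1: "insert v (set rest') \<subseteq> FV.span (insert v S)"
  proof -
    have "r - fscale (r p / v p) v \<in> FV.span (insert v S)" if "r \<in> S" for r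
      using that by (intro FV.span_diff FV.span_scale FV.span_base) auto
    moreover have "v \<in> FV.span (insert v S)" by (rule FV.span_base) simp
    ultimately show ?thesis by (auto simp: rest'_def S_def)
  qed
  have s2: "insert v S \<subseteq> FV.span (insert v (set rest'))"
  proof -
    have "r \<in> FV.span (insert v (set rest'))" if r: "r \<in> S" for r
    proof -
      have "r - fscale (r p / v p) v \<in> set rest'" using r by (auto simp: rest'_def S_def)
      then have "(r - fscale (r p / v p) v) + fscale (r p / v p) v \<in> FV.span (insert v (set rest'))"
        by (intro FV.span_add FV.span_scale FV.span_base) auto
      then show ?thesis by (simp only: diff_add_cancel)
    qed
    moreover have "v \<in> FV.span (insert v (set rest'))" by (rule FV.span_base) simp
    ultimately show ?thesis by (simp add: insert_subset subset_iff)
  qed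
  have "FV.dim (insert v (set rest')) = FV.dim (insert v S)"
    by (rule FV.span_eq_dim[OF FV.span_eq[THEN iffD2, OF conjI[OF s1 s2]]])
  then have dins': "FV.dim (insert v (set rest')) = length rest + 1" using dins by simp
  have fin': "finite (set rest')" by simp
  have len': "length rest' = n" using len by (simp add: rest'_def)
  have d': "FV.dim (set rest') \<le> length rest'"
    using FV.dim_le_card'[OF fin'] card_length[of rest'] by linarith
  have vS': "v \<notin> FV.span (set rest')"
  proof
    assume "v \<in> FV.span (set rest')"
    then have "FV.dim (insert v (set rest')) = FV.dim (set rest')" using FV.dim_insert_fin[OF fin'] by simp
    then show False using dins' d' len len' by simp
  qed
  have "FV.dim (set rest') = length rest'"
    using FV.dim_insert_fin[OF fin', of v] vS' dins' len len' by simp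
  then have "wedge_list rest' \<noteq> (0 :: nat set \<Rightarrow> 'a)" using Suc.hyps(1)[of rest'] len' by simp
  then obtain K where K: "(wedge_list rest' :: nat set \<Rightarrow> 'a) K \<noteq> 0" by (auto simp: fun_eq_iff)
  have sK: "finite K \<and> K \<subseteq> UNIV - {p}" using wedge_list_support[OF rp K] by simp
  then have pK: "p \<notin> K" "finite K" by auto
  have zero: "(wedge_list rest' :: nat set \<Rightarrow> 'a) J = 0" if "p \<in> J" for J
    using wedge_list_support[OF rp, of J] that by auto
  have "(wedge_list vs :: nat set \<Rightarrow> 'a) (insert p K) = wedge (vec1 v) (wedge_list rest') (insert p K)"
    using wedge_list_elim[of v "\<lambda>r. r p / v p" rest] by (simp add: vs wedge_list_Cons rest'_def)
  also have "\<dots> = (\<Sum>i\<in>insert p K. sg (insert p K) i * v i * wedge_list rest' (insert p K - {i}))"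
    using pK by (simp add: wedge_vec1)
  also have "\<dots> = sg (insert p K) p * v p * wedge_list rest' (insert p K - {p})
      + (\<Sum>i\<in>K. sg (insert p K) i * v i * wedge_list rest' (insert p K - {i}))"
    using pK by (simp add: sum.insert)
  also have "(\<Sum>i\<in>K. sg (insert p K) i * v i * (wedge_list rest' :: nat set \<Rightarrow> 'a) (insert p K - {i})) = 0"
  proof (rule sum.neutral, intro ballI)
    fix i assume "i \<in> K"
    then have "p \<in> insert p K - {i}" using pK by auto
    then show "sg (insert p K) i * v i * (wedge_list rest' :: nat set \<Rightarrow> 'a) (insert p K - {i}) = 0"
      using zero by simp
  qed
  also have "insert p K - {p} = K" using pK by auto
  finally have "(wedge_list vs :: nat set \<Rightarrow> 'a) (insert p K) = sg (insert p K) p * v p * wedge_list rest' K"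
    by simp
  also have "\<dots> \<noteq> 0" using K p sg_nz by simp
  finally show ?case by (auto simp: fun_eq_iff)
qed




definition Xs :: "nat \<Rightarrow> nat \<Rightarrow> nat set set" where
  "Xs k m = {I. I \<subseteq> {0..<m} \<and> card I = k}"

lemma Ext_Vx: "Ext k m = Vx (Xs k m)"
  by (auto simp: Ext_def Vx_def Xs_def)

lemma Vsp_Vx: "Vsp m = Vx {0..<m}"
  by (auto simp: Vsp_def Vx_def)

lemma finite_Xs: "finite (Xs k m)"
proof -
  have "Xs k m \<subseteq> Pow {0..<m}" by (auto simp: Xs_def)
  then show ?thesis by (rule finite_subset) simp
qed

lemma card_Xs: "card (Xs k m) = m choose k"
  unfolding Xs_def using n_subsets[of "{0..<m}" k] by simp

lemma finite_Grass: "finite (Grass l m :: (nat \<Rightarrow> 'a::{field,finite}) set set)"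
proof -
  have "Grass l m \<subseteq> Pow (Vsp m :: (nat \<Rightarrow> 'a) set)" by (auto simp: Grass_def)
  moreover have "finite (Vsp m :: (nat \<Rightarrow> 'a) set)" unfolding Vsp_Vx by (rule finite_Vx) simp
  ultimately show ?thesis using finite_subset by blast
qed

lemma rep_facts:
  fixes rep :: "(nat \<Rightarrow> 'a::{field,finite}) set \<Rightarrow> (nat set \<Rightarrow> 'a)"
  assumes isr: "is_rep l m rep" and W: "W \<in> Grass l m"
  shows "rep W \<in> Ext l m" "W = {u. wedge (vec1 u) (rep W) = 0}"
proof -
  obtain vs where vs: "length vs = l" "distinct vs" "findependent (set vs)"
    "fspan (set vs) = W" "rep W = wedge_list vs"
    using isr W unfolding is_rep_def by blast
  have dvs: "FV.dim (set vs) = l"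
    using FV.dim_eq_card_independent[OF vs(3)] distinct_card[OF vs(2)] vs(1) by simp
  have WV: "W \<subseteq> Vsp m" using W by (simp add: Grass_def)
  have vsW: "set vs \<subseteq> W" using vs(4) FV.span_superset by metis
  have vanish: "\<forall>v\<in>set vs. \<forall>i. i \<notin> {0..<m} \<longrightarrow> v i = 0"
    using vsW WV by (auto simp: Vsp_def)
  show "rep W \<in> Ext l m"
    unfolding Ext_def using wedge_list_support[OF vanish] vs(1,5) by auto
  show "W = {u. wedge (vec1 u) (rep W) = 0}"
  proof (intro equalityI subsetI)
    fix u assume "u \<in> W"
    then show "u \<in> {u. wedge (vec1 u) (rep W) = 0}"
      using wedge_list_span[of u vs] vs(4,5) by simp
  next
    fix u assume u: "u \<in> {u. wedge (vec1 u) (rep W) = 0}"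
    show "u \<in> W"
    proof (rule ccontr)
      assume "u \<notin> W"
      then have "u \<notin> FV.span (set vs)" using vs(4) by simp
      then have "FV.dim (set (u # vs)) = length (u # vs)"
        using FV.dim_insert_fin[of "set vs" u] dvs vs(1) by simp
      then have "wedge_list (u # vs) \<noteq> (0 :: nat set \<Rightarrow> 'a)" by (rule wedge_list_nonzero)
      then show False using u vs(5) by (simp add: wedge_list_Cons)
    qed
  qed
qed

lemma rep_inj:
  fixes rep :: "(nat \<Rightarrow> 'a::{field,finite}) set \<Rightarrow> (nat set \<Rightarrow> 'a)"
  assumes isr: "is_rep l m rep"
  shows "inj_on rep (Grass l m)"
proof (rule inj_onI)
  fix W W' assume "W \<in> Grass l m" "W' \<in> Grass l m" "rep W = rep W'"
  then show "W = W'" using rep_facts(2)[OF isr] by metis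
qed

lemma rep_span:
  fixes rep :: "(nat \<Rightarrow> 'a::{field,finite}) set \<Rightarrow> (nat set \<Rightarrow> 'a)"
  assumes isr: "is_rep l m rep"
  shows "Vx (Xs l m) \<subseteq> FV.span (rep ` Grass l m)"
proof -
  have dI: "delta I \<in> FV.span (rep ` Grass l m)" if I: "I \<in> Xs l m" for I
  proof -
    have Im: "I \<subseteq> {0..<m}" "card I = l" using I by (auto simp: Xs_def)
    have finI: "finite I" using Im(1) finite_subset by blast
    define W where "W = (Vx I :: (nat \<Rightarrow> 'a) set)"
    have WG: "W \<in> Grass l m"
      unfolding Grass_def W_def using Im Vx_subspace dim_Vx[OF finI]
      by (auto simp: Vx_def Vsp_def)
    obtain vs where vs: "length vs = l" "distinct vs" "findependent (set vs)"
      "fspan (set vs) = W" "rep W = wedge_list vs"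
      using isr WG unfolding is_rep_def by blast
    have dvs: "FV.dim (set vs) = length vs"
      using FV.dim_eq_card_independent[OF vs(3)] distinct_card[OF vs(2)] by simp
    have vsW: "set vs \<subseteq> W" using vs(4) FV.span_superset by metis
    have vanish: "\<forall>v\<in>set vs. \<forall>i. i \<notin> I \<longrightarrow> v i = 0"
      using vsW by (auto simp: W_def Vx_def)
    have supp: "rep W K = 0" if "K \<noteq> I" for K
    proof (rule ccontr)
      assume "rep W K \<noteq> 0"
      then have "finite K \<and> K \<subseteq> I \<and> card K = length vs"
        using wedge_list_support[OF vanish] vs(5) by simp
      then have "K = I" using card_subset_eq[OF finI] Im(2) vs(1) by metis
      then show False using that by simp
    qed
    have nz: "rep W \<noteq> 0" using wedge_list_nonzero[OF dvs] vs(5) by simp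
    have cI: "rep W I \<noteq> 0"
    proof
      assume z: "rep W I = 0"
      have "rep W = 0"
      proof
        fix K show "rep W K = 0 K" using z supp by (cases "K = I") auto
      qed
      then show False using nz by simp
    qed
    have "delta I = fscale (1 / rep W I) (rep W)"
      using supp cI by (auto simp: fun_eq_iff delta_def fscale_apply)
    moreover have "rep W \<in> FV.span (rep ` Grass l m)" using WG by (intro FV.span_base) simp
    ultimately show ?thesis by (simp add: FV.span_scale)
  qed
  have "delta ` Xs l m \<subseteq> FV.span (rep ` Grass l m)" using dI by (intro image_subsetI)
  then have "FV.span (delta ` Xs l m) \<subseteq> FV.span (rep ` Grass l m)"
    by (rule FV.span_minimal[OF _ FV.subspace_span])
  then show ?thesis using Vx_span_delta[OF finite_Xs[of l m]] by (rule order_trans[rotated])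
qed

definition sgnI :: "nat \<Rightarrow> nat set \<Rightarrow> 'a::field" where
  "sgnI m I = (-1) ^ card {(i, j). i \<in> I \<and> j \<in> {0..<m} - I \<and> j < i}"

definition phi :: "nat \<Rightarrow> (nat set \<Rightarrow> 'a::field) \<Rightarrow> (nat set \<Rightarrow> 'a)" where
  "phi m \<omega> = (\<lambda>I. sgnI m I * \<omega> ({0..<m} - I))"

lemma top_wedge:
  assumes "\<alpha> \<in> Ext l m"
  shows "top_coeff m (wedge \<alpha> \<omega>) = dot (Xs l m) \<alpha> (phi m \<omega>)"
proof -
  have "top_coeff m (wedge \<alpha> \<omega>) = (\<Sum>I\<in>Pow {0..<m}. sgnI m I * \<alpha> I * \<omega> ({0..<m} - I))"
    by (simp add: top_coeff_def wedge_def sgnI_def)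
  also have "\<dots> = (\<Sum>I\<in>Xs l m. sgnI m I * \<alpha> I * \<omega> ({0..<m} - I))"
  proof (rule sum.mono_neutral_right)
    show "finite (Pow {0..<m::nat})" by simp
    show "Xs l m \<subseteq> Pow {0..<m}" by (auto simp: Xs_def)
    show "\<forall>I\<in>Pow {0..<m} - Xs l m. sgnI m I * \<alpha> I * \<omega> ({0..<m} - I) = 0"
      using assms by (auto simp: Ext_def Xs_def)
  qed
  also have "\<dots> = dot (Xs l m) \<alpha> (phi m \<omega>)"
    by (simp add: dot_def phi_def algebra_simps)
  finally show ?thesis .
qed

lemma cw_cong:
  assumes "\<And>I. I \<in> X \<Longrightarrow> u I = u' I"
  shows "cw X G r u = cw X G r u'"
  using assms by (simp add: cw_def dot_def fun_eq_iff)

lemma sgnI_sq: "sgnI m I * sgnI m I = (1::'a::field)"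
proof -
  have "((-1::'a) ^ n) * (-1) ^ n = 1" for n :: nat
    by (induction n) (auto simp: algebra_simps)
  then show ?thesis by (simp add: sgnI_def)
qed

lemma code_eq:
  fixes rep :: "(nat \<Rightarrow> 'a::{field,finite}) set \<Rightarrow> (nat set \<Rightarrow> 'a)"
  assumes isr: "is_rep l m rep" and lm: "l \<le> m"
  shows "grassmann_code l m rep = cw (Xs l m) (Grass l m) rep ` Vx (Xs l m)"
proof -
  let ?c = "cw (Xs l m) (Grass l m) rep"
  have tau_eq: "tau l m rep \<omega> = ?c (phi m \<omega>)" for \<omega>
    using top_wedge[OF rep_facts(1)[OF isr]] by (auto simp: tau_def cw_def fun_eq_iff)
  show ?thesis
  proof (intro equalityI subsetI)
    fix y assume "y \<in> grassmann_code l m rep"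
    then obtain \<omega> where "y = tau l m rep \<omega>" by (auto simp: grassmann_code_def)
    define u where "u = (\<lambda>I. if I \<in> Xs l m then phi m \<omega> I else 0)"
    have "u \<in> Vx (Xs l m)" by (simp add: u_def Vx_def)
    moreover have "?c (phi m \<omega>) = ?c u" by (rule cw_cong) (simp add: u_def)
    then have "y = ?c u" using tau_eq \<open>y = _\<close> by simp
    ultimately show "y \<in> ?c ` Vx (Xs l m)" by blast
  next
    fix y assume "y \<in> ?c ` Vx (Xs l m)"
    then obtain u where u: "u \<in> Vx (Xs l m)" "y = ?c u" by blast
    define \<omega> where "\<omega> = (\<lambda>J. if J \<subseteq> {0..<m} \<and> card J = m - l
        then sgnI m ({0..<m} - J) * u ({0..<m} - J) else (0::'a))"
    have oE: "\<omega> \<in> Ext (m - l) m" by (auto simp: Ext_def \<omega>_def split: if_splits)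
    have "phi m \<omega> I = u I" if I: "I \<in> Xs l m" for I
    proof -
      have Im: "I \<subseteq> {0..<m}" "card I = l" using I by (auto simp: Xs_def)
      have c: "card ({0..<m} - I) = m - l" using Im by (simp add: card_Diff_subset finite_subset)
      have e: "{0..<m} - ({0..<m} - I) = I" using Im by auto
      have "phi m \<omega> I = sgnI m I * (sgnI m I * u I)"
        by (simp add: phi_def \<omega>_def c e)
      also have "\<dots> = u I" by (simp add: mult.assoc[symmetric] sgnI_sq)
      finally show ?thesis .
    qed
    then have "?c (phi m \<omega>) = ?c u" by (rule cw_cong)
    then have "y = tau l m rep \<omega>" using u tau_eq by simp
    then show "y \<in> grassmann_code l m rep" using oE by (auto simp: grassmann_code_def)
  qed
qed

theorem corollary5p2:
  fixes l m s :: nat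
    and rep :: "(nat \<Rightarrow> 'a::{field,finite}) set \<Rightarrow> (nat set \<Rightarrow> 'a)"
  assumes "1 \<le> l" and "l \<le> m"
    and "is_rep l m rep"
    and "1 \<le> s" and "s \<le> m choose l"
  shows "ghw (Grass l m) (grassmann_code l m rep) s
           = card (Grass l m :: (nat \<Rightarrow> 'a) set set) - g_s l m rep s"
proof -
  have rV: "rep ` Grass l m \<subseteq> Vx (Xs l m)"
    using rep_facts(1)[OF assms(3)] Ext_Vx by blast
  have "ghw (Grass l m) (grassmann_code l m rep) s
      = ghw (Grass l m) (cw (Xs l m) (Grass l m) rep ` Vx (Xs l m)) s"
    by (simp add: code_eq[OF assms(3,2)])
  also have "\<dots> = card (Grass l m :: (nat \<Rightarrow> 'a) set set) - Max {card (E \<inter> rep ` Grass l m) | E. E \<subseteq> Vx (Xs l m) \<and> FV.subspace E \<and> FV.dim (Vx (Xs l m) :: (nat set \<Rightarrow> 'a) set) - FV.dim E = s}"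
    by (rule code_ghw[OF finite_Xs finite_Grass rV rep_inj[OF assms(3)] rep_span[OF assms(3)]])
      (simp add: card_Xs assms(5))
  also have "Max {card (E \<inter> rep ` Grass l m) | E. E \<subseteq> Vx (Xs l m) \<and> FV.subspace E \<and> FV.dim (Vx (Xs l m) :: (nat set \<Rightarrow> 'a) set) - FV.dim E = s} = g_s l m rep s"
    by (simp add: g_s_def gE_def Tset_def Ext_Vx)
  finally show ?thesis .
qed


end
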